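(* Let $p,m$ be integers with $m\ge1$ and $0\le p\le[\frac m2]$, and let $c_j=c_j(p,m)$. Then $\frac{2c_1}{m-1}+\frac{c_2}{2}+c_3>0$ in each of the following cases: ($p=0$, $m\ge2$); ($p=1$, $m\ge3$); ($p\ge2$, $m\ge17$); ($p<\frac m2$, $5\le m\le16$).
   Context: With $\binom ab=0$ for $b<0$: $c_1=\frac1{180}\binom mp-\frac1{12}\binom{m-2}{p-1}+\frac12\binom{m-4}{p-2}$, $c_2=-\frac1{180}\binom mp+\frac12\binom{m-2}{p-1}-2\binom{m-4}{p-2}$, $c_3=\frac1{72}\binom mp-\frac16\binom{m-2}{p-1}+\frac12\binom{m-4}{p-2}$. *)

theory Defs
  imports Complex_Main
begin

definition binom :: "int \<Rightarrow> int \<Rightarrow> real" where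
  "binom a b = (if b < 0 then 0 else (real_of_int a) gchoose (nat b))"

definition c1 :: "int \<Rightarrow> int \<Rightarrow> real" where
  "c1 p m = binom m p / 180 - binom (m - 2) (p - 1) / 12 + binom (m - 4) (p - 2) / 2"

definition c2 :: "int \<Rightarrow> int \<Rightarrow> real" where
  "c2 p m = - binom m p / 180 + binom (m - 2) (p - 1) / 2 - 2 * binom (m - 4) (p - 2)"

definition c3 :: "int \<Rightarrow> int \<Rightarrow> real" where
  "c3 p m = binom m p / 72 - binom (m - 2) (p - 1) / 6 + binom (m - 4) (p - 2) / 2"

end

theory Submission
  imports Defs
begin

lemma ring_aux:
  fixes x c a s d y e :: real
  assumes h1: "x * c = a * s" and h2: "d * c = y * e"
  shows "a * s * d = x * y * e"
proof -
  have "a * s * d = (x * c) * d" using h1 by simp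
  also have "\<dots> = x * (d * c)" by (simp add: ac_simps)
  also have "\<dots> = x * y * e" using h2 by simp
  finally show ?thesis .
qed

lemma choose_rel:
  fixes N k :: nat
  assumes "1 \<le> k" "k + 1 \<le> N"
  shows "real (N choose k) * real k * real (N - k) = real N * real (N - 1) * real ((N - 2) choose (k - 1))"
proof -
  define j where "j = N - 2"
  define i where "i = k - 1"
  have j: "N = Suc (Suc j)" and i: "k = Suc i" using assms unfolding i_def j_def by auto
  have e1: "Suc (Suc j) * (Suc j choose i) = (Suc (Suc j) choose Suc i) * Suc i"
    by (rule Suc_times_binomial_eq)
  have e2: "(Suc j - i) * (Suc j choose i) = Suc j * ((Suc j - 1) choose i)"
    by (rule binomial_absorb_comp)
  have e1r: "real (Suc (Suc j)) * real (Suc j choose i) = real (Suc (Suc j) choose Suc i) * real (Suc i)"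
    using e1 by (metis of_nat_mult)
  have e2r: "real (Suc j - i) * real (Suc j choose i) = real (Suc j) * real (j choose i)"
    using e2 by (metis diff_Suc_1 of_nat_mult)
  have L: "N - k = Suc j - i" "N - 1 = Suc j" "N - 2 = j" "k - 1 = i" using i j by simp_all
  show ?thesis unfolding L unfolding i j
    using ring_aux[OF e1r e2r] .
qed

lemma binom_nat: "0 \<le> a \<Longrightarrow> 0 \<le> b \<Longrightarrow> binom a b = real (nat a choose nat b)"
proof -
  assume "0 \<le> a" "0 \<le> b"
  then obtain u v where "a = int u" "b = int v" by (metis nonneg_eq_int)
  then show ?thesis unfolding binom_def by (simp add: binomial_gbinomial)
qed

lemma rels:
  fixes p m :: int
  assumes "2 \<le> p" "5 \<le> m" "p \<le> m - 2"
  shows "binom m p > 0"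
    "real_of_int m * (real_of_int m - 1) * binom (m-2) (p-1) = real_of_int (p*(m-p)) * binom m p"
    "(real_of_int m - 2) * (real_of_int m - 3) * binom (m-4) (p-2)
       = (real_of_int (p*(m-p)) - real_of_int m + 1) * binom (m-2) (p-1)"
proof -
  define n where "n = nat m"
  define k where "k = nat p"
  have m: "m = int n" and p: "p = int k" using assms unfolding n_def k_def by auto
  have kn: "2 \<le> k" "5 \<le> n" "k + 2 \<le> n" using assms m p by auto
  have A: "binom m p = real (n choose k)" using binom_nat[of m p] assms m p by simp
  have B: "binom (m-2) (p-1) = real ((n-2) choose (k-1))"
    using binom_nat[of "m-2" "p-1"] assms m p kn by (simp add: nat_diff_distrib)
  have C: "binom (m-4) (p-2) = real ((n-4) choose (k-2))"
    using binom_nat[of "m-4" "p-2"] assms m p kn by (simp add: nat_diff_distrib)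
  have r1: "real (n choose k) * real k * real (n - k) = real n * real (n - 1) * real ((n - 2) choose (k - 1))"
    by (rule choose_rel) (use kn in auto)
  have r2: "real ((n-2) choose (k-1)) * real (k-1) * real (n - 2 - (k-1)) = real (n-2) * real (n - 2 - 1) * real ((n - 2 - 2) choose (k - 1 - 1))"
    by (rule choose_rel) (use kn in auto)
  show "binom m p > 0" unfolding A using kn by simp
  have X: "real_of_int (p*(m-p)) = real k * real (n - k)" using m p kn by (simp add: of_nat_diff)
  show "real_of_int m * (real_of_int m - 1) * binom (m-2) (p-1) = real_of_int (p*(m-p)) * binom m p"
  proof -
    have "real_of_int m * (real_of_int m - 1) = real n * real (n-1)" using kn m by (simp add: of_nat_diff)
    then show ?thesis unfolding A B X using r1 by (simp add: ac_simps)
  qed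
  have X2: "real_of_int (p*(m-p)) - real_of_int m + 1 = real (k-1) * real (n-2-(k-1))"
    using m p kn by (simp add: of_nat_diff algebra_simps)
  show "(real_of_int m - 2) * (real_of_int m - 3) * binom (m-4) (p-2)
       = (real_of_int (p*(m-p)) - real_of_int m + 1) * binom (m-2) (p-1)"
  proof -
    have "(real_of_int m - 2) * (real_of_int m - 3) = real (n-2) * real (n-2-1)" using kn m by (simp add: of_nat_diff)
    moreover have "n - 2 - 2 = n - 4" "k - 1 - 1 = k - 2" by auto
    ultimately show ?thesis unfolding X2 B C using r2 by (simp add: ac_simps)
  qed
qed

lemma E_identity:
  fixes M X a b c :: real
  assumes M: "M \<ge> 5"
    and r1: "M * (M - 1) * b = X * a"
    and r2: "(M - 2) * (M - 3) * c = (X - M + 1) * b"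
  shows "(2 * (a/180 - b/12 + c/2) / (M - 1) + (- a/180 + b/2 - 2*c) / 2 + (a/72 - b/6 + c/2))
          * (180 * (M - 1) * (M * (M - 1) * (M - 2) * (M - 3)))
       = a * (M - 3) * (2*M^2*(M-1)*(M-2) + 15*(M-2)*(M-3)*X - 90*X*(X-M+1))"
proof -
  define E where "E = (2 * (a/180 - b/12 + c/2) / (M - 1) + (- a/180 + b/2 - 2*c) / 2 + (a/72 - b/6 + c/2))"
  define D where "D = M * (M - 1) * (M - 2) * (M - 3)"
  have "M - 1 \<noteq> 0" using M by simp
  then have e: "E * (180 * (M - 1)) = 2*M*a + 15*(M-3)*b - 90*(M-3)*c"
    unfolding E_def by (simp add: field_simps)
  have "E * (180 * (M - 1) * D) = (E * (180 * (M - 1))) * D" by (simp only: mult.assoc)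
  also have "\<dots> = (2*M*a + 15*(M-3)*b - 90*(M-3)*c) * D" by (simp only: e)
  also have "\<dots> = 2*M*a*D + 15*(M-3)*(M-2)*(M-3)*(M*(M-1)*b)
        - 90*(M-3)*M*(M-1)*((M-2)*(M-3)*c)" unfolding D_def by (simp add: algebra_simps)
  also have "\<dots> = 2*M*a*D + 15*(M-3)*(M-2)*(M-3)*(X*a)
        - 90*(M-3)*M*(M-1)*((X - M + 1) * b)" by (simp only: r1 r2)
  also have "\<dots> = 2*M*a*D + 15*(M-3)*(M-2)*(M-3)*(X*a)
        - 90*(M-3)*(X - M + 1)*(M*(M-1)*b)" by (simp add: algebra_simps)
  also have "\<dots> = 2*M*a*D + 15*(M-3)*(M-2)*(M-3)*(X*a)
        - 90*(M-3)*(X - M + 1)*(X*a)" by (simp only: r1)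
  also have "\<dots> = a * (M - 3) * (2*M^2*(M-1)*(M-2) + 15*(M-2)*(M-3)*X - 90*X*(X-M+1))"
    unfolding D_def by (simp add: algebra_simps power2_eq_square)
  finally show ?thesis unfolding E_def D_def .
qed

lemma Q_pos_large:
  fixes M X :: real
  assumes "M \<ge> 17" "0 \<le> X" "4 * X \<le> M^2"
  shows "2*M^2*(M-1)*(M-2) + 15*(M-2)*(M-3)*X - 90*X*(X-M+1) > 0"
proof -
  have h1: "X * (M^2/4 - X) \<ge> 0" using assms by simp
  have h2: "M*(M-2)*X \<le> M*(M-2)*(M^2/4)" using assms by (intro mult_left_mono) auto
  have h3: "M^2*(M-2)*(M-16) > 0" using assms by simp
  have "2*M^2*(M-1)*(M-2) + 15*(M-2)*(M-3)*X - 90*X*(X-M+1)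
      = 2*M^2*(M-1)*(M-2) - 15/2*(M*(M-2)*X) + 90*(X * (M^2/4 - X))"
    by (simp add: algebra_simps power2_eq_square)
  also have "\<dots> \<ge> 2*M^2*(M-1)*(M-2) - 15/2*(M*(M-2)*(M^2/4))" using h1 h2 by simp
  also have "2*M^2*(M-1)*(M-2) - 15/2*(M*(M-2)*(M^2/4)) = M^2*(M-2)*(M-16)/8"
    by (simp add: algebra_simps power2_eq_square)
  finally show ?thesis using h3 by simp
qed

lemma Q_pos_small:
  fixes m p :: int
  assumes "5 \<le> m" "m \<le> 16" "2 \<le> p" "2 * p < m"
  shows "2*m^2*(m-1)*(m-2) + 15*(m-2)*(m-3)*(p*(m-p)) - 90*(p*(m-p))*((p*(m-p))-m+1) > 0"
proof -
  have hm: "m = 5 \<or> m = 6 \<or> m = 7 \<or> m = 8 \<or> m = 9 \<or> m = 10 \<or> m = 11 \<or> m = 12 \<or> m = 13 \<or> m = 14 \<or> m = 15 \<or> m = 16"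
    using assms by presburger
  have hp: "p = 2 \<or> p = 3 \<or> p = 4 \<or> p = 5 \<or> p = 6 \<or> p = 7"
    using assms by presburger
  from hm hp assms show ?thesis by (elim disjE) simp_all
qed

theorem lemma5p4:
  fixes p m :: int
  assumes "m \<ge> 1" and "0 \<le> p" and "p \<le> m div 2"
    and "(p = 0 \<and> m \<ge> 2) \<or> (p = 1 \<and> m \<ge> 3) \<or> (p \<ge> 2 \<and> m \<ge> 17)
         \<or> (2 * p < m \<and> 5 \<le> m \<and> m \<le> 16)"
  shows "2 * c1 p m / (real_of_int m - 1) + c2 p m / 2 + c3 p m > 0"
proof -
  define M where "M = real_of_int m"
  consider (z) "p = 0" "m \<ge> 2" | (o) "p = 1" "m \<ge> 3" | (g) "p \<ge> 2" "m \<ge> 5" "p \<le> m - 2"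
      "m \<ge> 17 \<or> (2 * p < m \<and> m \<le> 16)"
    using assms by linarith
  then show ?thesis
  proof cases
    case z
    have b: "binom m p = 1" "binom (m-2) (p-1) = 0" "binom (m-4) (p-2) = 0"
      using z unfolding binom_def by simp_all
    have M1: "M - 1 > 0" using z unfolding M_def by simp
    have h: "1 / (90 * M - 90) > 0" using M1 by simp
    show ?thesis unfolding c1_def c2_def c3_def b M_def[symmetric] by simp (use h in linarith)
  next
    case o
    have b: "binom m p = M" "binom (m-2) (p-1) = 1" "binom (m-4) (p-2) = 0"
      using o unfolding binom_def M_def by simp_all
    have M3: "M \<ge> 3" using o unfolding M_def by simp
    have M1: "M - 1 > 0" using M3 by simp
    have h: "2 * (M/180 - 1/12 + 0/2) / (M - 1) > -1/12" using M1 M3 by (simp add: field_simps)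
    have gen: "0 < F + (- M / 180 + 1 / 2 - 2 * 0) / 2 + (M / 72 - 1 / 6 + 0 / 2)" if hF: "F > -1/12" for F :: real
    proof -
      have "(- M / 180 + 1 / 2 - 2 * 0) / 2 + (M / 72 - 1 / 6 + 0 / 2) = 1/12 + M/90" by (simp add: field_simps)
      then show ?thesis using hF M3 by linarith
    qed
    show ?thesis unfolding c1_def c2_def c3_def b M_def[symmetric] by (rule gen[OF h])
  next
    case g
    define X where "X = real_of_int (p*(m-p))"
    define a where "a = binom m p"
    define b where "b = binom (m-2) (p-1)"
    define c where "c = binom (m-4) (p-2)"
    have R: "a > 0" "M * (M - 1) * b = X * a" "(M - 2) * (M - 3) * c = (X - M + 1) * b"
      using rels[OF g(1) g(2) g(3)] unfolding a_def b_def c_def M_def X_def by auto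
    have M5: "M \<ge> 5" using g unfolding M_def by simp
    have Q: "2*M^2*(M-1)*(M-2) + 15*(M-2)*(M-3)*X - 90*X*(X-M+1) > 0"
    proof (cases "m \<ge> 17")
      case True
      have i1: "0 \<le> p*(m-p)" using g by simp
      have "0 \<le> (m - 2*p)^2" by simp
      then have i2: "4 * (p*(m-p)) \<le> m^2" by (simp add: power2_eq_square algebra_simps)
      have "0 \<le> X" using i1 unfolding X_def by (metis of_int_0_le_iff)
      moreover have "4 * X \<le> M^2" unfolding X_def M_def
        using i2 by (metis of_int_le_iff of_int_mult of_int_numeral of_int_power)
      moreover have "M \<ge> 17" using True unfolding M_def by simp
      ultimately show ?thesis by (intro Q_pos_large)
    next
      case False
      then have "2*m^2*(m-1)*(m-2) + 15*(m-2)*(m-3)*(p*(m-p)) - 90*(p*(m-p))*((p*(m-p))-m+1) > 0"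
        using g by (intro Q_pos_small) auto
      then have "real_of_int (2*m^2*(m-1)*(m-2) + 15*(m-2)*(m-3)*(p*(m-p)) - 90*(p*(m-p))*((p*(m-p))-m+1)) > 0"
        by (simp only: of_int_0_less_iff)
      then show ?thesis unfolding M_def X_def by simp
    qed
    have M3: "M - 3 > 0" "M - 1 > 0" "M - 2 > 0" "M > 0" using M5 by simp_all
    have K: "180 * (M - 1) * (M * (M - 1) * (M - 2) * (M - 3)) > 0" using M3 by simp
    have pos: "a * (M - 3) * (2*M^2*(M-1)*(M-2) + 15*(M-2)*(M-3)*X - 90*X*(X-M+1)) > 0"
      using R(1) M3 Q by simp
    have "(2 * (a/180 - b/12 + c/2) / (M - 1) + (- a/180 + b/2 - 2*c) / 2 + (a/72 - b/6 + c/2))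
          * (180 * (M - 1) * (M * (M - 1) * (M - 2) * (M - 3))) > 0"
      unfolding E_identity[OF M5 R(2) R(3)] by (rule pos)
    then have "(2 * (a/180 - b/12 + c/2) / (M - 1) + (- a/180 + b/2 - 2*c) / 2 + (a/72 - b/6 + c/2)) > 0"
      using K by (rule zero_less_mult_pos2)
    then show ?thesis unfolding c1_def c2_def c3_def a_def[symmetric] b_def[symmetric] c_def[symmetric] M_def[symmetric]
      by simp
  qed
qed

end
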